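(* There exists an invertible matrix $N\in\mathbb C^{n\times n}$ such that $$B(x_1,x_2,x_3)=x_3\,N\,S(x_1,x_2,x_3).$$
   Context: Let $a,b,c\in\mathbb C[s,v]$ be homogeneous of the same degree $n\ge3$, $\gcd(a,b,c)=1$, with $\phi=(a:b:c)$ birational onto its image. Let $p,q$ be a $\mu$-basis: a homogeneous basis of degrees $\mu\le n-\mu$ of the free syzygy module of $(a,b,c)$. $B(x_1,x_2,x_3)=(B_{i,j})_{0\le i,j\le n-1}\in\mathbb C[x_1,x_2,x_3]^{n\times n}$ is the Bézout matrix of $a(s,1)x_3-c(s,1)x_1$ and $b(s,1)x_3-c(s,1)x_2$, defined by $\sum_{i,j}B_{i,j}s^it^j=\frac{1}{s-t}\big[(a(s,1)x_3-c(s,1)x_1)(b(t,1)x_3-c(t,1)x_2)-(a(t,1)x_3-c(t,1)x_1)(b(s,1)x_3-c(s,1)x_2)\big]$. $S(x_1,x_2,x_3)$ is the $n\times n$ Sylvester matrix with respect to $(s,v)$ of $\sum_ix_ip_i(s,v)$ and $\sum_ix_iq_i(s,v)$, whose rows are the coefficient vectors, in the monomial basis of $\mathbb C[s,v]_{n-1}$, of $v^{n-\mu-1-k}s^k\sum_ix_ip_i$ ($0\le k\le n-\mu-1$) and $v^{\mu-1-k}s^k\sum_ix_iq_i$ ($0\le k\le\mu-1$), the rows of $B$ being likewise indexed so that row $i$ is the coefficient vector of $\sum_jB_{i,j}(\cdot)$ in the same monomial basis. *)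

theory Defs
  imports "HOL-Computational_Algebra.Polynomial_Factorial" "HOL-Computational_Algebra.Field_as_Ring" "Jordan_Normal_Form.Matrix"
begin

text \<open>Bivariate polynomials in (s,v) are represented as complex poly poly:
  the outer variable is v, the inner one is s.  So the monomial s^j v^m has
  coefficient coeff (coeff P m) j.\<close>

type_synonym bipoly = "complex poly poly"

definition var_s :: bipoly where "var_s = [:[:0, 1:]:]"
definition var_v :: bipoly where "var_v = [:0, 1:]"

definition bcoeff :: "bipoly \<Rightarrow> nat \<Rightarrow> nat \<Rightarrow> complex" where
  "bcoeff P j m = coeff (coeff P m) j"

definition homogeneous :: "nat \<Rightarrow> bipoly \<Rightarrow> bool" where
  "homogeneous d P \<longleftrightarrow> (\<forall>j m. bcoeff P j m \<noteq> 0 \<longrightarrow> j + m = d)"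

definition eval2 :: "bipoly \<Rightarrow> complex \<Rightarrow> complex \<Rightarrow> complex" where
  "eval2 P s v = poly (map_poly (\<lambda>q. poly q s) P) v"

definition const2 :: "complex \<Rightarrow> bipoly" where "const2 c = [:[:c:]:]"

definition dehom :: "bipoly \<Rightarrow> complex poly" where
  "dehom P = poly P 1"

text \<open>Syzygy of (a,b,c); triples indexed by 1,2,3.\<close>
definition syzygy :: "bipoly \<Rightarrow> bipoly \<Rightarrow> bipoly \<Rightarrow> (nat \<Rightarrow> bipoly) \<Rightarrow> bool" where
  "syzygy a b c h \<longleftrightarrow> h 1 * a + h 2 * b + h 3 * c = 0"

definition mu_basis :: "nat \<Rightarrow> bipoly \<Rightarrow> bipoly \<Rightarrow> bipoly \<Rightarrow> nat \<Rightarrow>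
    (nat \<Rightarrow> bipoly) \<Rightarrow> (nat \<Rightarrow> bipoly) \<Rightarrow> bool" where
  "mu_basis n a b c \<mu> p q \<longleftrightarrow>
     \<mu> \<le> n - \<mu> \<and>
     (\<forall>i\<in>{1..3}. homogeneous \<mu> (p i) \<and> homogeneous (n - \<mu>) (q i)) \<and>
     syzygy a b c p \<and> syzygy a b c q \<and>
     (\<forall>h. syzygy a b c h \<longrightarrow> (\<exists>f g. \<forall>i\<in>{1..3}. h i = f * p i + g * q i)) \<and>
     (\<forall>f g. (\<forall>i\<in>{1..3}. f * p i + g * q i = 0) \<longrightarrow> f = 0 \<and> g = 0)"

text \<open>phi = (a:b:c) : P^1 -> P^2 is birational onto its image, i.e. generically
  injective: injective outside a finite set of parameter values
  (the point at infinity of P^1 being a single extra point).\<close>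
definition birational_onto_image :: "bipoly \<Rightarrow> bipoly \<Rightarrow> bipoly \<Rightarrow> bool" where
  "birational_onto_image a b c \<longleftrightarrow>
     (\<exists>E :: complex set. finite E \<and>
       (\<forall>t t'. t \<notin> E \<longrightarrow> t' \<notin> E \<longrightarrow>
          (\<exists>l. l \<noteq> 0 \<and> eval2 a t' 1 = l * eval2 a t 1 \<and> eval2 b t' 1 = l * eval2 b t 1
                 \<and> eval2 c t' 1 = l * eval2 c t 1) \<longrightarrow> t = t'))"

text \<open>Bezout matrix of F = a(s,1) x3 - c(s,1) x1 and G = b(s,1) x3 - c(s,1) x2,
  evaluated at x = (x1,x2,x3).  Bivariate polys in (s,t): outer variable t.\<close>
definition bezout_form :: "bipoly \<Rightarrow> bipoly \<Rightarrow> bipoly \<Rightarrow> (nat \<Rightarrow> complex) \<Rightarrow> complex poly poly" where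
  "bezout_form a b c x =
     (let F = Polynomial.smult (x 3) (dehom a) - Polynomial.smult (x 1) (dehom c);
          G = Polynomial.smult (x 3) (dehom b) - Polynomial.smult (x 2) (dehom c);
          Fs = [:F:]; Gs = [:G:];
          Ft = map_poly (\<lambda>r. [:r:]) F; Gt = map_poly (\<lambda>r. [:r:]) G
      in (Fs * Gt - Ft * Gs) div [:[:0, 1:], [:-1:]:])"

definition bezout_mat :: "nat \<Rightarrow> bipoly \<Rightarrow> bipoly \<Rightarrow> bipoly \<Rightarrow> (nat \<Rightarrow> complex) \<Rightarrow> complex mat" where
  "bezout_mat n a b c x = mat n n (\<lambda>(i, j). coeff (coeff (bezout_form a b c x) j) i)"

text \<open>Sylvester matrix of sum x_i p_i and sum x_i q_i; column j corresponds to the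
  monomial s^j v^(n-1-j) of C[s,v]_(n-1).\<close>
definition lin_comb :: "(nat \<Rightarrow> complex) \<Rightarrow> (nat \<Rightarrow> bipoly) \<Rightarrow> bipoly" where
  "lin_comb x p = (\<Sum>i\<in>{1..3}. const2 (x i) * p i)"

definition sylv_mat :: "nat \<Rightarrow> nat \<Rightarrow> (nat \<Rightarrow> bipoly) \<Rightarrow> (nat \<Rightarrow> bipoly) \<Rightarrow> (nat \<Rightarrow> complex) \<Rightarrow> complex mat" where
  "sylv_mat n \<mu> p q x = mat n n (\<lambda>(r, j).
     (let P = (if r < n - \<mu>
               then var_v ^ (n - \<mu> - 1 - r) * var_s ^ r * lin_comb x p
               else var_v ^ (\<mu> - 1 - (r - (n - \<mu>))) * var_s ^ (r - (n - \<mu>)) * lin_comb x q)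
      in bcoeff P j (n - 1 - j)))"

end

theory Submission
  imports Defs "HOL-Computational_Algebra.Fundamental_Theorem_Algebra" "Jordan_Normal_Form.Determinant"
begin


definition cs :: "complex poly \<Rightarrow> complex poly poly" where "cs f = [:f:]"
definition ct :: "complex poly \<Rightarrow> complex poly poly" where "ct f = map_poly (\<lambda>r. [:r:]) f"
definition kc :: "complex \<Rightarrow> complex poly poly" where "kc c = [:[:c:]:]"
definition cf :: "complex poly poly \<Rightarrow> nat \<Rightarrow> nat \<Rightarrow> complex" where "cf K i j = coeff (coeff K j) i"
definition DD :: "complex poly poly" where "DD = [:[:0, 1:], [:-1:]:]"

lemma cf_eqI: "(\<And>i j. cf K i j = cf L i j) \<Longrightarrow> K = L"
  unfolding cf_def by (simp add: poly_eq_iff)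

lemma coeff_ct: "coeff (ct f) k = [:coeff f k:]"
  unfolding ct_def by (simp add: coeff_map_poly)

lemma cf_cs: "cf (cs f) i j = (if j = 0 then coeff f i else 0)"
  unfolding cf_def cs_def by (cases j) auto

lemma cf_ct: "cf (ct f) i j = (if i = 0 then coeff f j else 0)"
  unfolding cf_def coeff_ct by (cases i) auto

lemma cf_add[simp]: "cf (K + L) i j = cf K i j + cf L i j"
  unfolding cf_def by simp
lemma cf_diff[simp]: "cf (K - L) i j = cf K i j - cf L i j"
  unfolding cf_def by simp
lemma cf_minus[simp]: "cf (- K) i j = - cf K i j"
  unfolding cf_def by simp
lemma cf_0[simp]: "cf 0 i j = 0"
  unfolding cf_def by simp
lemma cf_kc_mult[simp]: "cf (kc c * K) i j = c * cf K i j"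
  unfolding cf_def kc_def by simp
lemma cf_sum: "cf (\<Sum>x\<in>X. f x) i j = (\<Sum>x\<in>X. cf (f x) i j)"
  unfolding cf_def by (simp add: coeff_sum)

lemma ct_add[simp]: "ct (f + g) = ct f + ct g"
  by (rule cf_eqI) (simp add: cf_ct)
lemma ct_diff[simp]: "ct (f - g) = ct f - ct g"
  by (rule cf_eqI) (simp add: cf_ct)
lemma ct_0[simp]: "ct 0 = 0"
  by (rule cf_eqI) (simp add: cf_ct)
lemma ct_minus[simp]: "ct (- f) = - ct f"
  by (rule cf_eqI) (simp add: cf_ct)
lemma ct_smult[simp]: "ct (Polynomial.smult c f) = kc c * ct f"
  by (rule cf_eqI) (simp add: cf_ct)
lemma cs_add[simp]: "cs (f + g) = cs f + cs g"
  by (rule cf_eqI) (simp add: cf_cs)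
lemma cs_diff[simp]: "cs (f - g) = cs f - cs g"
  by (rule cf_eqI) (simp add: cf_cs)
lemma cs_smult[simp]: "cs (Polynomial.smult c f) = kc c * cs f"
  by (rule cf_eqI) (simp add: cf_cs)
lemma cs_mult[simp]: "cs (f * g) = cs f * cs g"
  unfolding cs_def by simp
lemma cs_0[simp]: "cs 0 = 0"
  unfolding cs_def by simp

lemma cf_mult_ct: "cf (K * ct u) i j = (\<Sum>k\<le>j. cf K i k * coeff u (j - k))"
proof -
  have "coeff (K * ct u) j = (\<Sum>k\<le>j. coeff K k * [:coeff u (j - k):])"
    by (simp add: coeff_mult coeff_ct)
  then show ?thesis unfolding cf_def by (simp add: coeff_sum mult.commute)
qed

lemma ct_mult[simp]: "ct (f * g) = ct f * ct g"
  by (rule cf_eqI) (auto simp: cf_mult_ct cf_ct coeff_mult)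

lemma cf_mult_ct': "cf (ct u * K) i j = (\<Sum>k\<le>j. cf K i k * coeff u (j - k))"
  by (simp add: mult.commute cf_mult_ct)

definition dd :: "complex poly \<Rightarrow> complex poly poly" where
  "dd f = (\<Sum>j\<le>degree f. monom (\<Sum>i\<le>degree f. monom (coeff f (i+j+1)) i) j)"

lemma coeff_sum_monom: "coeff (\<Sum>j\<le>d. monom (g j) j) k = (if k \<le> d then g k else 0)"
  by (simp add: coeff_sum)

lemma cf_dd: "cf (dd f) i j = coeff f (i+j+1)"
  unfolding cf_def dd_def by (auto simp: coeff_sum coeff_eq_0)

lemma cf_dd_zero: "degree f \<le> j \<Longrightarrow> cf (dd f) i j = 0"
  by (simp add: cf_dd coeff_eq_0)

lemma cf_DD_mult: "cf (DD * K) i j =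
   (if i = 0 then 0 else cf K (i - 1) j) - (if j = 0 then 0 else cf K i (j - 1))"
proof -
  have "DD * K = Polynomial.smult [:0,1:] K - pCons 0 K"
  proof -
    have m: "[:-1:] = (-1::complex poly)" by (simp add: one_pCons)
    show ?thesis unfolding DD_def by (simp add: m)
  qed
  then show ?thesis unfolding cf_def
    by (cases i; cases j) (auto simp: coeff_pCons)
qed

lemma dd_diff: "cs f - ct f = DD * dd f"
  by (rule cf_eqI) (auto simp: cf_DD_mult cf_dd cf_cs cf_ct)

lemma dehom_add[simp]: "dehom (P + Q) = dehom P + dehom Q" unfolding dehom_def by simp
lemma dehom_diff[simp]: "dehom (P - Q) = dehom P - dehom Q" unfolding dehom_def by simp
lemma dehom_minus[simp]: "dehom (- P) = - dehom P" unfolding dehom_def by simp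
lemma dehom_mult[simp]: "dehom (P * Q) = dehom P * dehom Q" unfolding dehom_def by simp
lemma dehom_0[simp]: "dehom 0 = 0" unfolding dehom_def by simp
lemma dehom_1[simp]: "dehom 1 = 1" unfolding dehom_def by simp
lemma dehom_sum: "dehom (\<Sum>x\<in>X. f x) = (\<Sum>x\<in>X. dehom (f x))" unfolding dehom_def by (simp add: poly_sum)
lemma dehom_const2_mult[simp]: "dehom (const2 c * P) = Polynomial.smult c (dehom P)"
  unfolding dehom_def const2_def by simp

lemma coeff_dehom: "coeff (dehom P) j = (\<Sum>m\<le>degree P. bcoeff P j m)"
  unfolding dehom_def bcoeff_def by (simp add: poly_altdef coeff_sum)

lemma hom_coeff_dehom: assumes "homogeneous d P"
  shows "coeff (dehom P) j = (if j \<le> d then bcoeff P j (d - j) else 0)"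
proof -
  have "(\<Sum>m\<le>degree P. bcoeff P j m) = (\<Sum>m\<le>degree P. if m = d - j \<and> j \<le> d then bcoeff P j (d - j) else 0)"
    using assms unfolding homogeneous_def by (intro sum.cong) force+
  also have "\<dots> = (if j \<le> d then bcoeff P j (d - j) else 0)"
    by (auto simp: bcoeff_def coeff_eq_0)
  finally show ?thesis by (simp add: coeff_dehom)
qed

lemma hom_degree: assumes "homogeneous d P" shows "degree (dehom P) \<le> d"
  by (rule degree_le) (simp add: hom_coeff_dehom[OF assms])

lemma hom_bcoeff: assumes "homogeneous d P"
  shows "bcoeff P j m = (if j + m = d then coeff (dehom P) j else 0)"
proof (cases "j + m = d")
  case True
  then have "m = d - j" "j \<le> d" by auto
  then show ?thesis using True by (simp add: hom_coeff_dehom[OF assms])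
next
  case False
  with assms show ?thesis by (auto simp: homogeneous_def)
qed

lemma bcoeff_eqI: "(\<And>j m. bcoeff P j m = bcoeff Q j m) \<Longrightarrow> P = Q"
  unfolding bcoeff_def by (simp add: poly_eq_iff)

lemma hom_eq: assumes "homogeneous d P" "homogeneous d Q" "dehom P = dehom Q"
  shows "P = Q"
  by (rule bcoeff_eqI) (simp add: hom_bcoeff[OF assms(1)] hom_bcoeff[OF assms(2)] assms(3))

lemma hom_0[simp]: "homogeneous d 0" unfolding homogeneous_def bcoeff_def by simp

lemma hom_dehom_0: assumes "homogeneous d P" "dehom P = 0" shows "P = 0"
  using hom_eq[OF assms(1) hom_0[of d]] assms(2) by simp

lemma bcoeff_add[simp]: "bcoeff (P + Q) j m = bcoeff P j m + bcoeff Q j m" unfolding bcoeff_def by simp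
lemma bcoeff_diff[simp]: "bcoeff (P - Q) j m = bcoeff P j m - bcoeff Q j m" unfolding bcoeff_def by simp
lemma bcoeff_minus[simp]: "bcoeff (- P) j m = - bcoeff P j m" unfolding bcoeff_def by simp
lemma bcoeff_const2_mult[simp]: "bcoeff (const2 c * P) j m = c * bcoeff P j m"
  unfolding bcoeff_def const2_def by simp
lemma bcoeff_sum: "bcoeff (\<Sum>x\<in>X. f x) j m = (\<Sum>x\<in>X. bcoeff (f x) j m)"
  unfolding bcoeff_def by (simp add: coeff_sum)

lemma hom_add: "homogeneous d P \<Longrightarrow> homogeneous d Q \<Longrightarrow> homogeneous d (P + Q)"
  unfolding homogeneous_def by (metis add.right_neutral bcoeff_add)
lemma hom_diff: "homogeneous d P \<Longrightarrow> homogeneous d Q \<Longrightarrow> homogeneous d (P - Q)"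
  unfolding homogeneous_def by (metis diff_zero bcoeff_diff)
lemma hom_minus: "homogeneous d P \<Longrightarrow> homogeneous d (- P)"
  unfolding homogeneous_def by simp
lemma hom_const2_mult: "homogeneous d P \<Longrightarrow> homogeneous d (const2 c * P)"
  unfolding homogeneous_def by simp
lemma hom_sum: "(\<And>x. x \<in> X \<Longrightarrow> homogeneous d (f x)) \<Longrightarrow> homogeneous d (\<Sum>x\<in>X. f x)"
  by (induction X rule: infinite_finite_induct) (auto intro: hom_add)

lemma bcoeff_mult: "bcoeff (P * Q) j m =
   (\<Sum>k\<le>m. \<Sum>l\<le>j. bcoeff P l k * bcoeff Q (j - l) (m - k))"
  unfolding bcoeff_def by (simp add: coeff_mult coeff_sum)

lemma hom_mult: assumes "homogeneous d P" "homogeneous e Q"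
  shows "homogeneous (d + e) (P * Q)"
  unfolding homogeneous_def
proof (intro allI impI)
  fix j m assume "bcoeff (P * Q) j m \<noteq> 0"
  then obtain k l where kl: "k \<le> m" "l \<le> j" "bcoeff P l k * bcoeff Q (j - l) (m - k) \<noteq> 0"
    unfolding bcoeff_mult by (meson atMost_iff sum.not_neutral_contains_not_neutral)
  then have "l + k = d" "(j - l) + (m - k) = e" using assms unfolding homogeneous_def by auto
  then show "j + m = d + e" using kl by linarith
qed

definition hz :: "nat \<Rightarrow> complex poly \<Rightarrow> bipoly" where
  "hz d g = (\<Sum>j\<le>d. monom (monom (coeff g j) j) (d - j))"

lemma bcoeff_hz: "bcoeff (hz d g) j m = (if j \<le> d \<and> m = d - j then coeff g j else 0)"
proof -
  have "bcoeff (hz d g) j m = (\<Sum>i\<le>d. if i = j then (if m = d - i then coeff g i else 0) else 0)"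
    unfolding hz_def bcoeff_def coeff_sum by (intro sum.cong) (auto simp: coeff_monom)
  also have "\<dots> = (if j \<le> d \<and> m = d - j then coeff g j else 0)"
    by (subst sum.delta) auto
  finally show ?thesis .
qed

lemma hom_hz: "homogeneous d (hz d g)"
  unfolding homogeneous_def bcoeff_hz by auto

lemma dehom_hz: assumes "degree g \<le> d" shows "dehom (hz d g) = g"
proof (rule poly_eqI)
  fix j show "coeff (dehom (hz d g)) j = coeff g j"
    using assms by (auto simp: hom_coeff_dehom[OF hom_hz] bcoeff_hz coeff_eq_0)
qed

definition D0 :: "complex \<Rightarrow> bipoly" where "D0 z = [:[:0, 1:], [:-z:]:]"

lemma hom_D0: "homogeneous 1 (D0 z)"
  unfolding homogeneous_def bcoeff_def D0_def
  by (auto simp: coeff_pCons split: nat.splits)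

lemma dehom_D0: "dehom (D0 z) = [:-z, 1:]"
  unfolding dehom_def D0_def by simp

lemma hom_var_v: "homogeneous 1 var_v"
  unfolding homogeneous_def bcoeff_def var_v_def
  by (auto simp: coeff_pCons split: nat.splits)

lemma dehom_var_v: "dehom var_v = 1"
  unfolding dehom_def var_v_def by simp

lemma hom_factor: assumes "homogeneous n P" "n \<ge> 1" "homogeneous 1 D"
  "dehom P = dehom D * g" "degree g \<le> n - 1"
  shows "D dvd P"
proof -
  have "homogeneous (1 + (n - 1)) (D * hz (n - 1) g)"
    by (rule hom_mult[OF assms(3) hom_hz])
  then have h: "homogeneous n (D * hz (n - 1) g)" using assms(2) by simp
  have "P = D * hz (n - 1) g"
    by (rule hom_eq[OF assms(1) h]) (metis dehom_mult dehom_hz assms(4,5))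
  then show ?thesis by simp
qed

lemma root_dvd: assumes "homogeneous n P" "n \<ge> 1" "poly (dehom P) z = 0"
  shows "D0 z dvd P"
proof -
  obtain g where g: "dehom P = [:-z, 1:] * g"
    using assms(3) by (auto simp: poly_eq_0_iff_dvd elim: dvdE)
  have "degree g \<le> n - 1"
  proof (cases "g = 0")
    case False
    have "degree ([:-z, 1:] * g) = degree [:-z, 1:] + degree g"
      by (rule degree_mult_eq) (use False in auto)
    then have "degree (dehom P) = 1 + degree g" unfolding g by simp
    with hom_degree[OF assms(1)] show ?thesis by simp
  qed simp
  then show ?thesis using hom_factor[OF assms(1,2) hom_D0] g by (simp add: dehom_D0)
qed

lemma v_dvd: assumes "homogeneous n P" "n \<ge> 1" "degree (dehom P) < n"
  shows "var_v dvd P"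
  by (rule hom_factor[OF assms(1,2) hom_var_v, of "dehom P"]) (use assms in \<open>auto simp: dehom_var_v\<close>)

lemma not_unit_D0: "\<not> is_unit (D0 z)"
proof
  assume "is_unit (D0 z)"
  then obtain u where "1 = D0 z * u" by (auto elim: dvdE)
  then have "1 = dehom (D0 z) * dehom u" by (metis dehom_1 dehom_mult)
  then have "is_unit [:-z, 1:]" by (metis dehom_D0 dvdI)
  then show False by (auto simp: is_unit_poly_iff)
qed

lemma not_unit_var_v: "\<not> is_unit var_v"
  by (auto simp: is_unit_poly_iff var_v_def)

lemma gcd3_dvd: assumes "gcd a (gcd b c) = 1" "D dvd a" "D dvd b" "D dvd c"
  shows "is_unit (D :: bipoly)"
  by (metis assms gcd_greatest)

lemma no_common_root:
  assumes "homogeneous n a" "homogeneous n b" "homogeneous n c" "gcd a (gcd b c) = 1" "n \<ge> 1"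
    and "poly (dehom a) z = 0" "poly (dehom b) z = 0" "poly (dehom c) z = 0"
  shows False
  using gcd3_dvd[OF assms(4) root_dvd[OF assms(1,5,6)] root_dvd[OF assms(2,5,7)] root_dvd[OF assms(3,5,8)]]
    not_unit_D0 by blast

lemma max_degree:
  assumes "homogeneous n a" "homogeneous n b" "homogeneous n c" "gcd a (gcd b c) = 1" "n \<ge> 1"
  shows "degree (dehom a) = n \<or> degree (dehom b) = n \<or> degree (dehom c) = n"
proof (rule ccontr)
  assume "\<not> ?thesis"
  then have "degree (dehom a) < n" "degree (dehom b) < n" "degree (dehom c) < n"
    using hom_degree assms by (metis le_neq_implies_less)+
  then show False
    using gcd3_dvd[OF assms(4) v_dvd[OF assms(1,5)] v_dvd[OF assms(2,5)] v_dvd[OF assms(3,5)]]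
      not_unit_var_v by blast
qed

lemma uni_coprime:
  fixes A1 A2 A3 :: "complex poly"
  assumes "\<And>z. \<not> (poly A1 z = 0 \<and> poly A2 z = 0 \<and> poly A3 z = 0)"
  shows "gcd A1 (gcd A2 A3) = 1"
proof -
  let ?g = "gcd A1 (gcd A2 A3)"
  have "degree ?g = 0"
  proof (rule ccontr)
    assume "degree ?g \<noteq> 0"
    then have "\<exists>z. poly ?g z = 0"
      by (intro fundamental_theorem_of_algebra) (simp add: constant_degree)
    then obtain z where "poly ?g z = 0" by blast
    moreover have "?g dvd A1" "?g dvd A2" "?g dvd A3" by (meson dvd_trans gcd_dvd1 gcd_dvd2)+
    ultimately show False using assms[of z] by (metis dvd_trans poly_eq_0_iff_dvd)
  qed
  moreover have "?g \<noteq> 0"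
  proof
    assume "?g = 0"
    then have "A1 = 0" "A2 = 0" "A3 = 0" by simp_all
    then show False using assms[of 0] by simp
  qed
  ultimately have "is_unit ?g" by (metis is_unit_iff_degree)
  then show ?thesis by simp
qed

lemma parallel:
  fixes A V :: "nat \<Rightarrow> complex poly"
  assumes cop: "gcd (A 1) (gcd (A 2) (A 3)) = 1"
    and par: "\<And>i j. V i * A j = V j * A i"
    and k: "A k \<noteq> 0"
  shows "\<exists>r. \<forall>i. V i * 1 = r * A i"
proof -
  have d: "A k dvd V k * A j" for j using par[of k j] by (metis dvd_triv_right)
  have "gcd (V k * A 1) (gcd (V k * A 2) (V k * A 3)) = normalize (V k)"
  proof -
    have cop': "gcd (A (Suc 0)) (gcd (A 2) (A 3)) = 1" using cop by simp
    show ?thesis by (simp add: gcd_mult_left cop')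
  qed
  moreover have "A k dvd gcd (V k * A 1) (gcd (V k * A 2) (V k * A 3))"
    using d by auto
  ultimately have "A k dvd V k" by simp
  then obtain r where r: "V k = A k * r" by (auto elim: dvdE)
  have "V i * 1 = r * A i" for i
  proof -
    have "V i * A k = (r * A i) * A k" using par[of i k] r by (simp add: algebra_simps)
    then show ?thesis using k by simp
  qed
  then show ?thesis by blast
qed

lemma kc_mult: "kc (a * b) = kc a * kc b" unfolding kc_def by simp
lemma kc_1[simp]: "kc 1 = 1" unfolding kc_def by (simp add: one_pCons)

lemma cross_id: fixes a1 a2 a3 p1 p2 p3 q1 q2 q3 x1 x2 x3 :: "'a::comm_ring_1"
  shows "(x3 * a1 - x1 * a3) * (x3 * (p3 * q1 - p1 * q3) - x2 * (p1 * q2 - p2 * q1)) -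
     (x3 * (p2 * q3 - p3 * q2) - x1 * (p1 * q2 - p2 * q1)) * (x3 * a2 - x2 * a3) =
     x3 * ((x1 * p1 + x2 * p2 + x3 * p3) * (a1 * q1 + a2 * q2 + a3 * q3) -
      (x1 * q1 + x2 * q2 + x3 * q3) * (a1 * p1 + a2 * p2 + a3 * p3))"
  by (simp add: algebra_simps)

lemma bez_identity:
  fixes A P Q :: "nat \<Rightarrow> complex poly" and x :: "nat \<Rightarrow> complex" and h0 :: complex
  assumes dP: "A 1 * P 1 + A 2 * P 2 + A 3 * P 3 = 0"
    and dQ: "A 1 * Q 1 + A 2 * Q 2 + A 3 * Q 3 = 0"
    and c1: "P 2 * Q 3 - P 3 * Q 2 = Polynomial.smult h0 (A 1)"
    and c2: "P 3 * Q 1 - P 1 * Q 3 = Polynomial.smult h0 (A 2)"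
    and c3: "P 1 * Q 2 - P 2 * Q 1 = Polynomial.smult h0 (A 3)"
    and h0: "h0 \<noteq> 0"
  defines "F \<equiv> Polynomial.smult (x 3) (A 1) - Polynomial.smult (x 1) (A 3)"
    and "G \<equiv> Polynomial.smult (x 3) (A 2) - Polynomial.smult (x 2) (A 3)"
    and "XP \<equiv> Polynomial.smult (x 1) (P 1) + Polynomial.smult (x 2) (P 2) + Polynomial.smult (x 3) (P 3)"
    and "XQ \<equiv> Polynomial.smult (x 1) (Q 1) + Polynomial.smult (x 2) (Q 2) + Polynomial.smult (x 3) (Q 3)"
    and "GP \<equiv> cs (A 1) * dd (P 1) + cs (A 2) * dd (P 2) + cs (A 3) * dd (P 3)"
    and "GQ \<equiv> cs (A 1) * dd (Q 1) + cs (A 2) * dd (Q 2) + cs (A 3) * dd (Q 3)"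
  shows "cs F * ct G - ct F * cs G = DD * (kc (x 3 / h0) * (ct XQ * GP - ct XP * GQ))"
proof -
  have tP: "ct (P i) = cs (P i) - DD * dd (P i)" for i using dd_diff[of "P i"] by (simp add: algebra_simps)
  have tQ: "ct (Q i) = cs (Q i) - DD * dd (Q i)" for i using dd_diff[of "Q i"] by (simp add: algebra_simps)
  have sP: "cs (A 1) * cs (P 1) + cs (A 2) * cs (P 2) + cs (A 3) * cs (P 3) = 0"
    using arg_cong[OF dP, of cs] by simp
  have sQ: "cs (A 1) * cs (Q 1) + cs (A 2) * cs (Q 2) + cs (A 3) * cs (Q 3) = 0"
    using arg_cong[OF dQ, of cs] by simp
  have eP: "cs (A 1) * ct (P 1) + cs (A 2) * ct (P 2) + cs (A 3) * ct (P 3) = - (DD * GP)"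
    unfolding tP GP_def using sP by (simp add: algebra_simps)
  have eQ: "cs (A 1) * ct (Q 1) + cs (A 2) * ct (Q 2) + cs (A 3) * ct (Q 3) = - (DD * GQ)"
    unfolding tQ GQ_def using sQ by (simp add: algebra_simps)
  have k1: "kc h0 * ct (A 1) = ct (P 2) * ct (Q 3) - ct (P 3) * ct (Q 2)"
    using arg_cong[OF c1, of ct] by simp
  have k2: "kc h0 * ct (A 2) = ct (P 3) * ct (Q 1) - ct (P 1) * ct (Q 3)"
    using arg_cong[OF c2, of ct] by simp
  have k3: "kc h0 * ct (A 3) = ct (P 1) * ct (Q 2) - ct (P 2) * ct (Q 1)"
    using arg_cong[OF c3, of ct] by simp
  have key: "kc h0 * (cs F * ct G - ct F * cs G) =
     kc (x 3) * (ct XP * (cs (A 1) * ct (Q 1) + cs (A 2) * ct (Q 2) + cs (A 3) * ct (Q 3))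
               - ct XQ * (cs (A 1) * ct (P 1) + cs (A 2) * ct (P 2) + cs (A 3) * ct (P 3)))"
  proof -
    have g: "kc h0 * ct G = kc (x 3) * (ct (P 3) * ct (Q 1) - ct (P 1) * ct (Q 3))
         - kc (x 2) * (ct (P 1) * ct (Q 2) - ct (P 2) * ct (Q 1))"
    proof -
      have "kc h0 * ct G = kc (x 3) * (kc h0 * ct (A 2)) - kc (x 2) * (kc h0 * ct (A 3))"
        unfolding G_def by (simp add: algebra_simps)
      then show ?thesis unfolding k2 k3 .
    qed
    have f: "kc h0 * ct F = kc (x 3) * (ct (P 2) * ct (Q 3) - ct (P 3) * ct (Q 2))
         - kc (x 1) * (ct (P 1) * ct (Q 2) - ct (P 2) * ct (Q 1))"
    proof -
      have "kc h0 * ct F = kc (x 3) * (kc h0 * ct (A 1)) - kc (x 1) * (kc h0 * ct (A 3))"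
        unfolding F_def by (simp add: algebra_simps)
      then show ?thesis unfolding k1 k3 .
    qed
    have "kc h0 * (cs F * ct G - ct F * cs G) = cs F * (kc h0 * ct G) - (kc h0 * ct F) * cs G"
      by (simp add: algebra_simps)
    also have "\<dots> = kc (x 3) * (ct XP * (cs (A 1) * ct (Q 1) + cs (A 2) * ct (Q 2) + cs (A 3) * ct (Q 3))
               - ct XQ * (cs (A 1) * ct (P 1) + cs (A 2) * ct (P 2) + cs (A 3) * ct (P 3)))"
      unfolding g f unfolding F_def G_def XP_def XQ_def by simp (rule cross_id)
    finally show ?thesis .
  qed
  have inv: "kc (1 / h0) * kc h0 = 1" using h0 by (simp flip: kc_mult)
  have "cs F * ct G - ct F * cs G = kc (1 / h0) * (kc h0 * (cs F * ct G - ct F * cs G))"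
    by (simp add: mult.assoc[symmetric] inv)
  also have "\<dots> = kc (1 / h0) * (kc (x 3) * (DD * (ct XQ * GP - ct XP * GQ)))"
    unfolding key eP eQ by (simp add: algebra_simps)
  also have "\<dots> = DD * (kc (x 3 / h0) * (ct XQ * GP - ct XP * GQ))"
    by (simp add: kc_mult[symmetric] algebra_simps)
  finally show ?thesis .
qed

lemma var_v_pow: "var_v ^ e = monom 1 e"
  unfolding var_v_def by (simp add: monom_altdef)

lemma const_poly_pow: "[:u:] ^ k = [:u ^ k:]"
  by (induction k) (auto simp: mult.commute)

lemma var_s_pow: "var_s ^ k = [:monom 1 k:]"
  unfolding var_s_def const_poly_pow by (simp add: monom_altdef)

lemma bcoeff_shift: "bcoeff (var_v ^ e * var_s ^ k * L) j m =
   (if m < e \<or> j < k then 0 else bcoeff L (j - k) (m - e))"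
  unfolding var_v_pow var_s_pow bcoeff_def mult.assoc
  by (simp add: coeff_monom_mult)

lemma sylv_entry: assumes "homogeneous d L" "e + k + d = n - 1" "j \<le> n - 1"
  shows "bcoeff (var_v ^ e * var_s ^ k * L) j (n - 1 - j) = coeff (monom 1 k * dehom L) j"
proof (cases "j < k")
  case True
  then show ?thesis by (simp add: bcoeff_shift coeff_monom_mult)
next
  case False
  show ?thesis
  proof (cases "j - k \<le> d")
    case True
    have e: "n - 1 - j - e = d - (j - k)" "\<not> n - 1 - j < e" using assms(2,3) True False by arith+
    show ?thesis using False True e
      by (simp add: bcoeff_shift coeff_monom_mult hom_coeff_dehom[OF assms(1)])
  next
    case True2: False
    have e: "n - 1 - j < e" using assms(2,3) True2 False by arith
    show ?thesis using False True2 e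
      by (simp add: bcoeff_shift coeff_monom_mult hom_coeff_dehom[OF assms(1)])
  qed
qed

lemma sum3: "(\<Sum>i\<in>{1..3::nat}. f i) = f 1 + f 2 + f 3"
proof -
  have "{1..3::nat} = {1, 2, 3}" by auto
  then show ?thesis by (simp add: add.assoc)
qed

lemma hom_lin_comb: "(\<And>l. l \<in> {1..3} \<Longrightarrow> homogeneous d (p l)) \<Longrightarrow> homogeneous d (lin_comb x p)"
  unfolding lin_comb_def by (intro hom_sum hom_const2_mult) auto

lemma dehom_const2[simp]: "dehom (const2 c) = [:c:]" unfolding dehom_def const2_def by simp

lemma dehom_lin_comb: "dehom (lin_comb x p) =
  Polynomial.smult (x 1) (dehom (p 1)) + Polynomial.smult (x 2) (dehom (p 2)) + Polynomial.smult (x 3) (dehom (p 3))"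
  unfolding lin_comb_def dehom_sum sum3 by simp

lemma sylv_entry2: assumes "\<forall>l\<in>{1..3}. homogeneous \<mu> (p l) \<and> homogeneous (n - \<mu>) (q l)"
  "\<mu> \<le> n - \<mu>" "n \<ge> 1" "r < n" "j < n"
  shows "sylv_mat n \<mu> p q x $$ (r, j) = (if r < n - \<mu> then coeff (monom 1 r * dehom (lin_comb x p)) j
     else coeff (monom 1 (r - (n - \<mu>)) * dehom (lin_comb x q)) j)"
proof -
  have hp: "homogeneous \<mu> (lin_comb x p)" "homogeneous (n - \<mu>) (lin_comb x q)"
    using assms(1) by (auto intro: hom_lin_comb)
  show ?thesis
  proof (cases "r < n - \<mu>")
    case True
    have "bcoeff (var_v ^ (n - \<mu> - 1 - r) * var_s ^ r * lin_comb x p) j (n - 1 - j)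
       = coeff (monom 1 r * dehom (lin_comb x p)) j"
      by (rule sylv_entry[OF hp(1)]) (use assms True in auto)
    then show ?thesis using assms(2-5) True unfolding sylv_mat_def
      by (simp add: Let_def)
  next
    case False
    have "bcoeff (var_v ^ (\<mu> - 1 - (r - (n - \<mu>))) * var_s ^ (r - (n - \<mu>)) * lin_comb x q) j (n - 1 - j)
       = coeff (monom 1 (r - (n - \<mu>)) * dehom (lin_comb x q)) j"
      by (rule sylv_entry[OF hp(2)]) (use assms False in auto)
    then show ?thesis using assms(2-5) False unfolding sylv_mat_def
      by (simp add: Let_def)
  qed
qed

lemma sum_split_add: "(\<Sum>r<a + (b::nat). f r) = (\<Sum>r<a. f r) + (\<Sum>k<b. f (a + k))"
  by (induction b) (auto simp: add.assoc)

lemma conv_sum: fixes g :: "nat \<Rightarrow> complex" and X :: "complex poly"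
  assumes "\<And>r. r \<ge> M \<Longrightarrow> g r = 0" "j < n" "M \<le> n"
  shows "(\<Sum>r<M. g r * coeff (monom 1 r * X) j) = (\<Sum>k\<le>j. g k * coeff X (j - k))"
proof -
  have "(\<Sum>r<M. g r * coeff (monom 1 r * X) j) = (\<Sum>r<n. g r * coeff (monom 1 r * X) j)"
    by (rule sum.mono_neutral_left) (use assms in auto)
  also have "\<dots> = (\<Sum>r<n. if r \<in> {..j} then g r * coeff X (j - r) else 0)"
    by (rule sum.cong) (auto simp: coeff_monom_mult)
  also have "\<dots> = (\<Sum>r\<in>{..<n} \<inter> {..j}. g r * coeff X (j - r))"
    by (simp add: sum.inter_restrict)
  also have "{..<n} \<inter> {..j} = {..j}" using assms(2) by auto
  finally show ?thesis .
qed

lemma coeff_dd_zero: "degree f \<le> r \<Longrightarrow> coeff (dd f) r = 0"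
  by (rule poly_eqI) (metis cf_dd_zero cf_def coeff_0)

lemma coeff_cs_mult: "coeff (cs a * K) r = a * coeff K r"
  unfolding cs_def by simp

lemma mat_mult_entry: assumes "N \<in> carrier_mat n n" "S \<in> carrier_mat n n" "i < n" "j < n"
  shows "(N * S) $$ (i, j) = (\<Sum>r<n. N $$ (i, r) * S $$ (r, j))"
  using assms by (auto simp: scalar_prod_def atLeast0LessThan intro!: sum.cong)

lemma cf_G_zero: assumes "degree Q1 \<le> r" "degree Q2 \<le> r" "degree Q3 \<le> r"
  shows "cf (cs A1 * dd Q1 + cs A2 * dd Q2 + cs A3 * dd Q3) i r = 0"
  unfolding cf_def by (simp add: coeff_cs_mult coeff_dd_zero assms)





definition Nmat :: "nat \<Rightarrow> nat \<Rightarrow> complex \<Rightarrow> bipoly \<Rightarrow> bipoly \<Rightarrow> complex mat" where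
  "Nmat n \<mu> h0 GP GQ = mat n n (\<lambda>(i, r). if r < n - \<mu> then - (cf GQ i r / h0) else cf GP i (r - (n - \<mu>)) / h0)"

lemma arith_h: "(c::complex) / h * (u - v) = c * (- v / h + u / h)"
  by (cases "h = 0") (simp_all add: field_simps)

lemma main_identity:
  fixes a b c :: bipoly and p q :: "nat \<Rightarrow> bipoly" and h0 :: complex
  assumes hp: "\<forall>l\<in>{1..3}. homogeneous \<mu> (p l) \<and> homogeneous (n - \<mu>) (q l)"
    and mu: "\<mu> \<le> n - \<mu>" and n: "n \<ge> 1"
    and dP: "dehom a * dehom (p 1) + dehom b * dehom (p 2) + dehom c * dehom (p 3) = 0"
    and dQ: "dehom a * dehom (q 1) + dehom b * dehom (q 2) + dehom c * dehom (q 3) = 0"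
    and c1: "dehom (p 2) * dehom (q 3) - dehom (p 3) * dehom (q 2) = Polynomial.smult h0 (dehom a)"
    and c2: "dehom (p 3) * dehom (q 1) - dehom (p 1) * dehom (q 3) = Polynomial.smult h0 (dehom b)"
    and c3: "dehom (p 1) * dehom (q 2) - dehom (p 2) * dehom (q 1) = Polynomial.smult h0 (dehom c)"
    and h0: "h0 \<noteq> 0"
  defines "GP \<equiv> cs (dehom a) * dd (dehom (p 1)) + cs (dehom b) * dd (dehom (p 2)) + cs (dehom c) * dd (dehom (p 3))"
    and "GQ \<equiv> cs (dehom a) * dd (dehom (q 1)) + cs (dehom b) * dd (dehom (q 2)) + cs (dehom c) * dd (dehom (q 3))"
  shows "bezout_mat n a b c x = x 3 \<cdot>\<^sub>m (Nmat n \<mu> h0 GP GQ * sylv_mat n \<mu> p q x)"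
proof -
  define N where "N = Nmat n \<mu> h0 GP GQ"
  define XP where "XP = dehom (lin_comb x p)"
  define XQ where "XQ = dehom (lin_comb x q)"
  have BI: "cs (Polynomial.smult (x 3) (dehom a) - Polynomial.smult (x 1) (dehom c)) *
            ct (Polynomial.smult (x 3) (dehom b) - Polynomial.smult (x 2) (dehom c)) -
            ct (Polynomial.smult (x 3) (dehom a) - Polynomial.smult (x 1) (dehom c)) *
            cs (Polynomial.smult (x 3) (dehom b) - Polynomial.smult (x 2) (dehom c)) =
            DD * (kc (x 3 / h0) * (ct XQ * GP - ct XP * GQ))"
    using bez_identity[of "\<lambda>l. if l = 1 then dehom a else if l = 2 then dehom b else dehom c"
        "\<lambda>l. dehom (p l)" "\<lambda>l. dehom (q l)" h0 x] dP dQ c1 c2 c3 h0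
    unfolding XP_def XQ_def GP_def GQ_def dehom_lin_comb by simp
  have DD0: "DD \<noteq> 0" unfolding DD_def by simp
  have form: "bezout_form a b c x = kc (x 3 / h0) * (ct XQ * GP - ct XP * GQ)"
    unfolding bezout_form_def Let_def DD_def[symmetric] unfolding cs_def[symmetric] ct_def[symmetric] BI
    using DD0 by simp
  have degP: "degree (dehom (p l)) \<le> \<mu>" if "l \<in> {1..3}" for l using hp that hom_degree by blast
  have degQ: "degree (dehom (q l)) \<le> n - \<mu>" if "l \<in> {1..3}" for l using hp that hom_degree by blast
  have GPz: "cf GP i r = 0" if "r \<ge> \<mu>" for i r
    unfolding GP_def by (rule cf_G_zero) (use degP[of 1] degP[of 2] degP[of 3] that in auto)
  have GQz: "cf GQ i r = 0" if "r \<ge> n - \<mu>" for i r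
    unfolding GQ_def by (rule cf_G_zero) (use degQ[of 1] degQ[of 2] degQ[of 3] that in auto)
  have Sc: "sylv_mat n \<mu> p q x \<in> carrier_mat n n" unfolding sylv_mat_def by simp
  have Nc: "N \<in> carrier_mat n n" unfolding N_def Nmat_def by simp
  show ?thesis unfolding N_def[symmetric]
  proof (rule eq_matI)
    fix i j assume ij: "i < dim_row (x 3 \<cdot>\<^sub>m (N * sylv_mat n \<mu> p q x))" "j < dim_col (x 3 \<cdot>\<^sub>m (N * sylv_mat n \<mu> p q x))"
    then have i: "i < n" and j: "j < n" using Sc Nc by auto
    have split: "n = (n - \<mu>) + \<mu>" using mu by simp
    have "(N * sylv_mat n \<mu> p q x) $$ (i, j) = (\<Sum>r<n. N $$ (i, r) * sylv_mat n \<mu> p q x $$ (r, j))"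
      by (rule mat_mult_entry[OF Nc Sc i j])
    also have "\<dots> = (\<Sum>r<n - \<mu>. N $$ (i, r) * sylv_mat n \<mu> p q x $$ (r, j))
       + (\<Sum>k<\<mu>. N $$ (i, n - \<mu> + k) * sylv_mat n \<mu> p q x $$ (n - \<mu> + k, j))"
      using sum_split_add[where a="n - \<mu>" and b=\<mu> and f="\<lambda>r. N $$ (i, r) * sylv_mat n \<mu> p q x $$ (r, j)"] mu by simp
    also have "\<dots> = (\<Sum>r<n - \<mu>. - (cf GQ i r / h0) * coeff (monom 1 r * XP) j)
       + (\<Sum>k<\<mu>. cf GP i k / h0 * coeff (monom 1 k * XQ) j)"
      using i j mu n by (auto simp: N_def Nmat_def sylv_entry2[OF hp mu n] XP_def XQ_def intro!: sum.cong arg_cong2[where f="(+)"])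
    also have "\<dots> = - (\<Sum>r<n - \<mu>. cf GQ i r * coeff (monom 1 r * XP) j) / h0
       + (\<Sum>k<\<mu>. cf GP i k * coeff (monom 1 k * XQ) j) / h0"
      by (simp add: sum_divide_distrib sum_negf)
    also have "\<dots> = - (\<Sum>k\<le>j. cf GQ i k * coeff XP (j - k)) / h0
       + (\<Sum>k\<le>j. cf GP i k * coeff XQ (j - k)) / h0"
      using conv_sum[of "n - \<mu>" "\<lambda>r. cf GQ i r" j n XP] conv_sum[of \<mu> "\<lambda>r. cf GP i r" j n XQ]
        GPz GQz j mu by auto
    finally have R: "(N * sylv_mat n \<mu> p q x) $$ (i, j) = \<dots>" .
    have L: "bezout_mat n a b c x $$ (i, j) = x 3 / h0 * ((\<Sum>k\<le>j. cf GP i k * coeff XQ (j - k))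
                - (\<Sum>k\<le>j. cf GQ i k * coeff XP (j - k)))"
      using i j unfolding bezout_mat_def form by (simp add: cf_def[symmetric] cf_mult_ct')
    show "bezout_mat n a b c x $$ (i, j) = (x 3 \<cdot>\<^sub>m (N * sylv_mat n \<mu> p q x)) $$ (i, j)"
    proof -
      have "(x 3 \<cdot>\<^sub>m (N * sylv_mat n \<mu> p q x)) $$ (i, j) = x 3 * (N * sylv_mat n \<mu> p q x) $$ (i, j)"
        using i j Sc Nc by simp
      then show ?thesis unfolding L R using h0 by (simp add: field_simps)
    qed
  next
    show "dim_row (bezout_mat n a b c x) = dim_row (x 3 \<cdot>\<^sub>m (N * sylv_mat n \<mu> p q x))"
      using Nc Sc by (simp add: bezout_mat_def)
    show "dim_col (bezout_mat n a b c x) = dim_col (x 3 \<cdot>\<^sub>m (N * sylv_mat n \<mu> p q x))"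
      using Nc Sc by (simp add: bezout_mat_def)
  qed
qed


lemma det_ne0_invertible: assumes A: "(A :: complex mat) \<in> carrier_mat n n" and d: "det A \<noteq> 0"
  shows "invertible_mat A"
proof -
  have "A \<in> Units (ring_mat TYPE(complex) n ())" by (rule det_non_zero_imp_unit[OF A d])
  then obtain B where B: "B \<in> carrier_mat n n" "B * A = 1\<^sub>m n" "A * B = 1\<^sub>m n"
    unfolding Units_def ring_mat_def by auto
  show ?thesis unfolding invertible_mat_def inverts_mat_def square_mat.simps
    using A B by auto
qed

definition lam :: "complex vec \<Rightarrow> nat \<Rightarrow> bipoly \<Rightarrow> complex poly" where
  "lam w n K = (\<Sum>i<n. Polynomial.smult (w $ i) (map_poly (\<lambda>c. coeff c i) K))"

lemma coeff_lam: "coeff (lam w n K) j = (\<Sum>i<n. w $ i * cf K i j)"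
  unfolding lam_def cf_def by (simp add: coeff_sum coeff_map_poly)

lemma lam_add: "lam w n (K + L) = lam w n K + lam w n L"
  by (rule poly_eqI) (simp add: coeff_lam distrib_left sum.distrib)
lemma lam_minus: "lam w n (- K) = - lam w n K"
  by (rule poly_eqI) (simp add: coeff_lam sum_negf)
lemma lam_diff: "lam w n (K - L) = lam w n K - lam w n L"
  by (rule poly_eqI) (simp add: coeff_lam right_diff_distrib sum_subtractf)

lemma lam_ct_mult: "lam w n (ct u * K) = lam w n K * u"
proof (rule poly_eqI)
  fix j
  have "coeff (lam w n (ct u * K)) j = (\<Sum>i<n. \<Sum>k\<le>j. w $ i * cf K i k * coeff u (j - k))"
    by (simp add: coeff_lam cf_mult_ct' sum_distrib_left mult.assoc)
  also have "\<dots> = (\<Sum>k\<le>j. \<Sum>i<n. w $ i * cf K i k * coeff u (j - k))"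
    by (rule sum.swap)
  also have "\<dots> = coeff (lam w n K * u) j"
    by (simp add: coeff_mult coeff_lam sum_distrib_right)
  finally show "coeff (lam w n (ct u * K)) j = coeff (lam w n K * u) j" .
qed

lemma dd_swap: "cs X * ct Y - cs Y * ct X = DD * (dd X * ct Y - dd Y * ct X)"
proof -
  have "cs X = ct X + DD * dd X" "cs Y = ct Y + DD * dd Y"
    using dd_diff[of X] dd_diff[of Y] by (simp_all add: algebra_simps)
  then show ?thesis by (simp add: algebra_simps)
qed

lemma eP_lemma: assumes "A1 * P1 + A2 * P2 + A3 * P3 = 0"
  shows "cs A1 * ct P1 + cs A2 * ct P2 + cs A3 * ct P3 = - (DD * (cs A1 * dd P1 + cs A2 * dd P2 + cs A3 * dd P3))"
proof -
  have t: "ct P = cs P - DD * dd P" for P using dd_diff[of P] by (simp add: algebra_simps)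
  have "cs A1 * cs P1 + cs A2 * cs P2 + cs A3 * cs P3 = 0"
    using arg_cong[OF assms, of cs] by simp
  then show ?thesis unfolding t by (simp add: algebra_simps)
qed

lemma koszul_step:
  assumes eP: "cs A1 * ct P1 + cs A2 * ct P2 + cs A3 * ct P3 = - (DD * GP)"
    and eQ: "cs A1 * ct Q1 + cs A2 * ct Q2 + cs A3 * ct Q3 = - (DD * GQ)"
    and K: "K1 = F * P1 + G * Q1" "K2 = F * P2 + G * Q2" "K3 = F * P3 + G * Q3"
    and Z: "cs A1 * ct K1 + cs A2 * ct K2 + cs A3 * ct K3 = DD * Z"
    and l: "lam w n GP = 0" "lam w n GQ = 0"
  shows "lam w n Z = 0"
proof -
  have "cs A1 * ct K1 + cs A2 * ct K2 + cs A3 * ct K3 =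
     ct F * (cs A1 * ct P1 + cs A2 * ct P2 + cs A3 * ct P3) + ct G * (cs A1 * ct Q1 + cs A2 * ct Q2 + cs A3 * ct Q3)"
    unfolding K by (simp add: algebra_simps)
  also have "\<dots> = DD * (- (ct F * GP + ct G * GQ))" unfolding eP eQ by (simp add: algebra_simps)
  finally have "DD * Z = DD * (- (ct F * GP + ct G * GQ))" using Z by simp
  moreover have "DD \<noteq> 0" unfolding DD_def by simp
  ultimately have "Z = - (ct F * GP + ct G * GQ)" by simp
  then show ?thesis by (simp add: lam_minus lam_add lam_diff lam_ct_mult l)
qed

lemma coeff_lam_dd: "coeff (lam w n (dd f)) j = (\<Sum>i<n. w $ i * coeff f (i + j + 1))"
  by (simp add: coeff_lam cf_dd)

lemma tri: fixes f :: "complex poly"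
  assumes deg: "degree f = n" and n: "n \<ge> 1" and z: "\<And>j. (\<Sum>i<n. w $ i * coeff f (i + j + 1)) = 0"
  shows "m < n \<Longrightarrow> w $ m = 0"
proof (induction m rule: less_induct)
  case (less m)
  have "(\<Sum>i<n. w $ i * coeff f (i + (n - 1 - m) + 1)) = (\<Sum>i<n. if i = m then w $ m * coeff f n else 0)"
  proof (rule sum.cong)
    fix i assume "i \<in> {..<n}"
    show "w $ i * coeff f (i + (n - 1 - m) + 1) = (if i = m then w $ m * coeff f n else 0)"
    proof (cases "i < m")
      case True then show ?thesis using less by auto
    next
      case False
      show ?thesis
      proof (cases "i = m")
        case True then show ?thesis using less by auto
      next
        case False2: False
        then have "i + (n - 1 - m) + 1 > degree f" using False less deg by auto
        then show ?thesis using False2 by (simp add: coeff_eq_0)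
      qed
    qed
  qed simp
  then have "w $ m * coeff f n = 0" using z[of "n - 1 - m"] less by simp
  moreover have "coeff f n \<noteq> 0"
  proof -
    have "f \<noteq> 0" using deg n by auto
    then show ?thesis using deg by auto
  qed
  ultimately show ?case by simp
qed


lemma main_invertible:
  fixes A P Q :: "nat \<Rightarrow> complex poly" and h0 :: complex
  assumes mu: "\<mu> \<le> n - \<mu>" and n: "n \<ge> 1"
    and dP: "A 1 * P 1 + A 2 * P 2 + A 3 * P 3 = 0"
    and dQ: "A 1 * Q 1 + A 2 * Q 2 + A 3 * Q 3 = 0"
    and degA: "\<forall>l\<in>{1..3}. degree (A l) \<le> n"
    and degPQ: "\<forall>l\<in>{1..3}. degree (P l) \<le> \<mu> \<and> degree (Q l) \<le> n - \<mu>"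
    and cop: "gcd (A 1) (gcd (A 2) (A 3)) = 1"
    and kn: "k \<in> {1..3}" "degree (A k) = n"
    and kz12: "\<exists>F G. A 2 = F * P 1 + G * Q 1 \<and> - A 1 = F * P 2 + G * Q 2 \<and> 0 = F * P 3 + G * Q 3"
    and kz13: "\<exists>F G. A 3 = F * P 1 + G * Q 1 \<and> 0 = F * P 2 + G * Q 2 \<and> - A 1 = F * P 3 + G * Q 3"
    and kz23: "\<exists>F G. 0 = F * P 1 + G * Q 1 \<and> A 3 = F * P 2 + G * Q 2 \<and> - A 2 = F * P 3 + G * Q 3"
    and h0: "h0 \<noteq> 0"
  defines "GP \<equiv> cs (A 1) * dd (P 1) + cs (A 2) * dd (P 2) + cs (A 3) * dd (P 3)"
    and "GQ \<equiv> cs (A 1) * dd (Q 1) + cs (A 2) * dd (Q 2) + cs (A 3) * dd (Q 3)"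
  shows "invertible_mat (Nmat n \<mu> h0 GP GQ)"
proof -
  define N where "N = Nmat n \<mu> h0 GP GQ"
  have Nc: "N \<in> carrier_mat n n" unfolding N_def Nmat_def by simp
  have "det N \<noteq> 0"
  proof
    assume "det N = 0"
    then have "det (transpose_mat N) = 0" using det_transpose[OF Nc] by simp
    then obtain w where w: "w \<in> carrier_vec n" "w \<noteq> 0\<^sub>v n" "transpose_mat N *\<^sub>v w = 0\<^sub>v n"
      using det_0_iff_vec_prod_zero[of "transpose_mat N" n] Nc by auto
    have Nw: "(\<Sum>i<n. N $$ (i, r) * w $ i) = 0" if r: "r < n" for r
    proof -
      have "(transpose_mat N *\<^sub>v w) $ r = 0" using w(3) r by simp
      then show ?thesis using r Nc w(1)
        by (auto simp: scalar_prod_def atLeast0LessThan intro!: sum.cong elim!: back_subst[where P="\<lambda>x. x = 0"])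
    qed
    have degP: "degree (P l) \<le> \<mu>" "degree (Q l) \<le> n - \<mu>" if "l \<in> {1..3}" for l
      using degPQ that by auto
    have lGQ: "lam w n GQ = 0"
    proof (rule poly_eqI)
      fix j
      show "coeff (lam w n GQ) j = coeff 0 j"
      proof (cases "j < n - \<mu>")
        case True
        then have "(\<Sum>i<n. N $$ (i, j) * w $ i) = 0" using Nw by simp
        moreover have "(\<Sum>i<n. N $$ (i, j) * w $ i) = - (\<Sum>i<n. w $ i * cf GQ i j) / h0"
          using True by (simp add: N_def Nmat_def sum_divide_distrib sum_negf mult.commute)
        ultimately show ?thesis using h0 by (simp add: coeff_lam)
      next
        case False
        then have "cf GQ i j = 0" for i unfolding GQ_def
          by (intro cf_G_zero) (use degP(2)[of 1] degP(2)[of 2] degP(2)[of 3] in auto)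
        then show ?thesis by (simp add: coeff_lam)
      qed
    qed
    have lGP: "lam w n GP = 0"
    proof (rule poly_eqI)
      fix j
      show "coeff (lam w n GP) j = coeff 0 j"
      proof (cases "j < \<mu>")
        case True
        then have "(\<Sum>i<n. N $$ (i, n - \<mu> + j) * w $ i) = 0" using Nw mu by simp
        moreover have "(\<Sum>i<n. N $$ (i, n - \<mu> + j) * w $ i) = (\<Sum>i<n. w $ i * cf GP i j) / h0"
        proof -
          have e: "N $$ (i, n - \<mu> + j) = cf GP i j / h0" if "i < n" for i
          proof -
            have "n - \<mu> + j < n" "\<not> n - \<mu> + j < n - \<mu>" "n - \<mu> + j - (n - \<mu>) = j"
              using True mu by arith+
            then show ?thesis using that unfolding N_def Nmat_def by (simp only: index_mat split) simp
          qed
          show ?thesis by (simp add: e sum_divide_distrib mult.commute)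
        qed
        ultimately show ?thesis using h0 by (simp add: coeff_lam)
      next
        case False
        then have "cf GP i j = 0" for i unfolding GP_def
          by (intro cf_G_zero) (use degP(1)[of 1] degP(1)[of 2] degP(1)[of 3] in auto)
        then show ?thesis by (simp add: coeff_lam)
      qed
    qed
    have eP: "cs (A 1) * ct (P 1) + cs (A 2) * ct (P 2) + cs (A 3) * ct (P 3) = - (DD * GP)"
      unfolding GP_def by (rule eP_lemma[OF dP])
    have eQ: "cs (A 1) * ct (Q 1) + cs (A 2) * ct (Q 2) + cs (A 3) * ct (Q 3) = - (DD * GQ)"
      unfolding GQ_def by (rule eP_lemma[OF dQ])
    define Phi where "Phi l = lam w n (dd (A l))" for l
    have pair: "Phi i * A j = Phi j * A i"
      if K: "cs (A 1) * ct (F * P 1 + G * Q 1) + cs (A 2) * ct (F * P 2 + G * Q 2) + cs (A 3) * ct (F * P 3 + G * Q 3)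
         = cs (A i) * ct (A j) - cs (A j) * ct (A i)"
      for i j F G
    proof -
      have "cs (A 1) * ct (F * P 1 + G * Q 1) + cs (A 2) * ct (F * P 2 + G * Q 2) + cs (A 3) * ct (F * P 3 + G * Q 3)
          = DD * (dd (A i) * ct (A j) - dd (A j) * ct (A i))"
        using K dd_swap by simp
      from koszul_step[OF eP eQ refl refl refl this lGP lGQ]
      have "lam w n (dd (A i) * ct (A j) - dd (A j) * ct (A i)) = 0" .
      then show ?thesis by (simp add: lam_diff mult.commute[of "dd _"] lam_ct_mult Phi_def)
    qed
    have p12: "Phi 1 * A 2 = Phi 2 * A 1"
    proof -
      obtain F G where FG: "A 2 = F * P 1 + G * Q 1" "- A 1 = F * P 2 + G * Q 2" "0 = F * P 3 + G * Q 3"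
        using kz12 by blast
      have "cs (A 1) * ct (F * P 1 + G * Q 1) + cs (A 2) * ct (F * P 2 + G * Q 2) + cs (A 3) * ct (F * P 3 + G * Q 3)
         = cs (A 1) * ct (A 2) - cs (A 2) * ct (A 1)"
        unfolding FG[symmetric] by simp
      from pair[OF this] show ?thesis .
    qed
    have p13: "Phi 1 * A 3 = Phi 3 * A 1"
    proof -
      obtain F G where FG: "A 3 = F * P 1 + G * Q 1" "0 = F * P 2 + G * Q 2" "- A 1 = F * P 3 + G * Q 3"
        using kz13 by blast
      have "cs (A 1) * ct (F * P 1 + G * Q 1) + cs (A 2) * ct (F * P 2 + G * Q 2) + cs (A 3) * ct (F * P 3 + G * Q 3)
         = cs (A 1) * ct (A 3) - cs (A 3) * ct (A 1)"
        unfolding FG[symmetric] by simp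
      from pair[OF this] show ?thesis .
    qed
    have p23: "Phi 2 * A 3 = Phi 3 * A 2"
    proof -
      obtain F G where FG: "0 = F * P 1 + G * Q 1" "A 3 = F * P 2 + G * Q 2" "- A 2 = F * P 3 + G * Q 3"
        using kz23 by blast
      have "cs (A 1) * ct (F * P 1 + G * Q 1) + cs (A 2) * ct (F * P 2 + G * Q 2) + cs (A 3) * ct (F * P 3 + G * Q 3)
         = cs (A 2) * ct (A 3) - cs (A 3) * ct (A 2)"
        unfolding FG[symmetric] by simp
      from pair[OF this] show ?thesis .
    qed
    define A' where "A' (l::nat) = (if l = 1 then A 1 else if l = 2 then A 2 else A 3)" for l
    define V' where "V' (l::nat) = (if l = 1 then Phi 1 else if l = 2 then Phi 2 else Phi 3)" for l
    have par: "V' i * A' j = V' j * A' i" for i j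
      unfolding A'_def V'_def using p12 p13 p23 by (auto simp: mult.commute)
    have cop': "gcd (A' 1) (gcd (A' 2) (A' 3)) = 1" using cop by (simp add: A'_def)
    have k3: "k = 1 \<or> k = 2 \<or> k = 3" using kn(1) by auto
    have Ak: "A' k = A k" "V' k = Phi k" using k3 by (auto simp: A'_def V'_def)
    have Ak0: "A' k \<noteq> 0" using Ak kn n by auto
    obtain r where r: "\<forall>i. V' i * 1 = r * A' i" using parallel[OF cop' par Ak0] by blast
    then have rk: "Phi k = r * A k" using Ak by (metis mult.right_neutral)
    have degPhi: "degree (Phi k) \<le> n - 1"
    proof (rule degree_le, intro allI impI)
      fix j assume "n - 1 < j"
      then have "coeff (A k) (i + j + 1) = 0" for i using kn(2) by (intro coeff_eq_0) auto
      then show "coeff (Phi k) j = 0" by (simp add: Phi_def coeff_lam_dd)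
    qed
    have "r = 0"
    proof (rule ccontr)
      assume "r \<noteq> 0"
      then have "degree (Phi k) = degree r + n" unfolding rk using Ak0 Ak kn by (simp add: degree_mult_eq)
      then show False using degPhi n by simp
    qed
    then have "Phi k = 0" using rk by simp
    then have z: "(\<Sum>i<n. w $ i * coeff (A k) (i + j + 1)) = 0" for j
    proof -
      have "coeff (lam w n (dd (A k))) j = 0" using \<open>Phi k = 0\<close> by (simp add: Phi_def)
      then show ?thesis by (simp only: coeff_lam_dd)
    qed
    have "w $ m = 0" if "m < n" for m using tri[OF kn(2) n z that] .
    then have "w = 0\<^sub>v n" using w(1) by (intro eq_vecI) auto
    then show False using w(2) by simp
  qed
  then show ?thesis unfolding N_def[symmetric] by (rule det_ne0_invertible[OF Nc])
qed

lemma cross_par: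
  fixes a1 a2 a3 p1 p2 p3 q1 q2 q3 :: "'a::comm_ring_1"
  assumes "a1 * p1 + a2 * p2 + a3 * p3 = 0" "a1 * q1 + a2 * q2 + a3 * q3 = 0"
  shows "(p2 * q3 - p3 * q2) * a2 = (p3 * q1 - p1 * q3) * a1"
    "(p3 * q1 - p1 * q3) * a3 = (p1 * q2 - p2 * q1) * a2"
    "(p1 * q2 - p2 * q1) * a1 = (p2 * q3 - p3 * q2) * a3"
proof -
  have "(p2 * q3 - p3 * q2) * a2 - (p3 * q1 - p1 * q3) * a1 = q3 * (a1 * p1 + a2 * p2 + a3 * p3) - p3 * (a1 * q1 + a2 * q2 + a3 * q3)"
    by (simp add: algebra_simps)
  then show "(p2 * q3 - p3 * q2) * a2 = (p3 * q1 - p1 * q3) * a1" using assms by simp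
  have "(p3 * q1 - p1 * q3) * a3 - (p1 * q2 - p2 * q1) * a2 = q1 * (a1 * p1 + a2 * p2 + a3 * p3) - p1 * (a1 * q1 + a2 * q2 + a3 * q3)"
    by (simp add: algebra_simps)
  then show "(p3 * q1 - p1 * q3) * a3 = (p1 * q2 - p2 * q1) * a2" using assms by simp
  have "(p1 * q2 - p2 * q1) * a1 - (p2 * q3 - p3 * q2) * a3 = q2 * (a1 * p1 + a2 * p2 + a3 * p3) - p2 * (a1 * q1 + a2 * q2 + a3 * q3)"
    by (simp add: algebra_simps)
  then show "(p1 * q2 - p2 * q1) * a1 = (p2 * q3 - p3 * q2) * a3" using assms by simp
qed

theorem proposition6p1:
  fixes n \<mu> :: nat and a b c :: bipoly and p q :: "nat \<Rightarrow> bipoly"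
  assumes "n \<ge> 3"
    and "homogeneous n a" and "homogeneous n b" and "homogeneous n c"
    and "gcd a (gcd b c) = 1"
    and "birational_onto_image a b c"
    and "mu_basis n a b c \<mu> p q"
  shows "\<exists>N \<in> carrier_mat n n. invertible_mat N \<and>
           (\<forall>x :: nat \<Rightarrow> complex. bezout_mat n a b c x = x 3 \<cdot>\<^sub>m (N * sylv_mat n \<mu> p q x))"
proof -
  note ha = assms(2) and hb = assms(3) and hc = assms(4) and g1 = assms(5)
  have n1: "n \<ge> 1" using assms(1) by simp
  note mb = assms(7)[unfolded mu_basis_def]
  have mu: "\<mu> \<le> n - \<mu>" using mb by (rule conjunct1)
  have hp: "\<forall>i\<in>{1..3}. homogeneous \<mu> (p i) \<and> homogeneous (n - \<mu>) (q i)"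
    using mb[THEN conjunct2] by (rule conjunct1)
  have sp: "syzygy a b c p" using mb[THEN conjunct2, THEN conjunct2] by (rule conjunct1)
  have sq: "syzygy a b c q" using mb[THEN conjunct2, THEN conjunct2, THEN conjunct2] by (rule conjunct1)
  have gen: "\<forall>h. syzygy a b c h \<longrightarrow> (\<exists>f g. \<forall>i\<in>{1..3}. h i = f * p i + g * q i)"
    using mb[THEN conjunct2, THEN conjunct2, THEN conjunct2, THEN conjunct2] by (rule conjunct1)
  have ind: "\<forall>f g. (\<forall>i\<in>{1..3}. f * p i + g * q i = 0) \<longrightarrow> f = 0 \<and> g = 0"
    using mb[THEN conjunct2, THEN conjunct2, THEN conjunct2, THEN conjunct2] by (rule conjunct2)
  define A where "A l = (if l = 1 then dehom a else if l = 2 then dehom b else dehom c)" for l :: nat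
  define P where "P l = dehom (p l)" for l
  define Q where "Q l = dehom (q l)" for l
  have A123: "A 1 = dehom a" "A 2 = dehom b" "A 3 = dehom c" by (simp_all add: A_def)
  have dP: "A 1 * P 1 + A 2 * P 2 + A 3 * P 3 = 0"
    using arg_cong[OF sp[unfolded syzygy_def], of dehom] by (simp add: A_def P_def mult.commute)
  have dQ: "A 1 * Q 1 + A 2 * Q 2 + A 3 * Q 3 = 0"
    using arg_cong[OF sq[unfolded syzygy_def], of dehom] by (simp add: A_def Q_def mult.commute)
  have degA: "\<forall>l\<in>{1..3}. degree (A l) \<le> n"
    using hom_degree[OF ha] hom_degree[OF hb] hom_degree[OF hc] by (simp add: A_def)
  have degPQ: "\<forall>l\<in>{1..3}. degree (P l) \<le> \<mu> \<and> degree (Q l) \<le> n - \<mu>"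
  proof
    fix l assume "l \<in> {1..(3::nat)}"
    then have "homogeneous \<mu> (p l)" "homogeneous (n - \<mu>) (q l)" using hp by auto
    then show "degree (P l) \<le> \<mu> \<and> degree (Q l) \<le> n - \<mu>" unfolding P_def Q_def
      using hom_degree by blast
  qed
  have cop: "gcd (A 1) (gcd (A 2) (A 3)) = 1"
    unfolding A123 by (rule uni_coprime) (use no_common_root[OF ha hb hc g1 n1] in blast)
  obtain k where kn: "k \<in> {1..3}" "degree (A k) = n"
  proof -
    have "degree (A 1) = n \<or> degree (A 2) = n \<or> degree (A 3) = n"
      unfolding A123 by (rule max_degree[OF ha hb hc g1 n1])
    then show thesis using that[of 1] that[of 2] that[of 3] by auto
  qed
  have kz: "\<exists>F G. dehom (h 1) = F * P 1 + G * Q 1 \<and> dehom (h 2) = F * P 2 + G * Q 2 \<and> dehom (h 3) = F * P 3 + G * Q 3"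
    if syz: "syzygy a b c h" for h
  proof -
    obtain f g where fg: "\<forall>i\<in>{1..3}. h i = f * p i + g * q i" using gen syz by blast
    show ?thesis by (rule exI[of _ "dehom f"], rule exI[of _ "dehom g"]) (use fg in \<open>auto simp: P_def Q_def\<close>)
  qed
  have kz12: "\<exists>F G. A 2 = F * P 1 + G * Q 1 \<and> - A 1 = F * P 2 + G * Q 2 \<and> 0 = F * P 3 + G * Q 3"
    using kz[of "\<lambda>l. if l = 1 then b else if l = 2 then - a else 0"] by (simp add: syzygy_def A_def algebra_simps)
  have kz13: "\<exists>F G. A 3 = F * P 1 + G * Q 1 \<and> 0 = F * P 2 + G * Q 2 \<and> - A 1 = F * P 3 + G * Q 3"
    using kz[of "\<lambda>l. if l = 1 then c else if l = 2 then 0 else - a"] by (simp add: syzygy_def A_def algebra_simps)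
  have kz23: "\<exists>F G. 0 = F * P 1 + G * Q 1 \<and> A 3 = F * P 2 + G * Q 2 \<and> - A 2 = F * P 3 + G * Q 3"
    using kz[of "\<lambda>l. if l = 1 then 0 else if l = 2 then c else - b"] by (simp add: syzygy_def A_def algebra_simps)
  define C where "C l = (if l = 1 then P 2 * Q 3 - P 3 * Q 2 else if l = 2 then P 3 * Q 1 - P 1 * Q 3
      else P 1 * Q 2 - P 2 * Q 1)" for l :: nat
  have Cpar: "C i * A j = C j * A i" for i j
  proof -
    note cp = cross_par[OF dP dQ]
    have C123: "C 1 = P 2 * Q 3 - P 3 * Q 2" "C 2 = P 3 * Q 1 - P 1 * Q 3" "C 3 = P 1 * Q 2 - P 2 * Q 1"
      by (simp_all add: C_def)
    have s: "C 1 * A 2 = C 2 * A 1" "C 2 * A 3 = C 3 * A 2" "C 3 * A 1 = C 1 * A 3"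
      unfolding C123 by (rule cp(1), rule cp(2), rule cp(3))
    have key: "C i' * A j' = C j' * A i'" if "i' \<in> {1,2,3}" "j' \<in> {1,2,3}" for i' j'
      using that s by auto
    define idx where "idx l = (if l = 1 then 1 else if l = 2 then 2 else (3::nat))" for l :: nat
    have idx: "C l = C (idx l)" "A l = A (idx l)" "idx l \<in> {1,2,3}" for l
      by (simp_all add: idx_def C_def A_def)
    have e: "C i * A j = C (idx i) * A (idx j)" "C j * A i = C (idx j) * A (idx i)"
      by (simp_all only: idx(1,2)[symmetric])
    show ?thesis unfolding e by (rule key[OF idx(3)[of i] idx(3)[of j]])
  qed
  have Ak0: "A k \<noteq> 0" using kn n1 by auto
  obtain r where r: "\<forall>i. C i * 1 = r * A i" using parallel[OF cop Cpar Ak0] by blast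
  have degC: "degree (C l) \<le> n" for l
  proof -
    have dp: "degree (P i) \<le> \<mu>" "degree (Q i) \<le> n - \<mu>" if "i \<in> {1..3}" for i using degPQ that by auto
    have dm: "degree (P i * Q j) \<le> n" if "i \<in> {1..3}" "j \<in> {1..3}" for i j
      using degree_mult_le[of "P i" "Q j"] dp[OF that(1)] dp[OF that(2)] mu by linarith
    show ?thesis unfolding C_def
      using dm[of 2 3] dm[of 3 2] dm[of 3 1] dm[of 1 3] dm[of 1 2] dm[of 2 1]
      by (auto intro!: degree_diff_le)
  qed
  have "r \<noteq> 0"
  proof
    assume r0: "r = 0"
    then have C0: "C l = 0" for l using r by simp
    have hpq: "homogeneous n (p i * q j)" if "i \<in> {1..3}" "j \<in> {1..3}" for i j
    proof -
      have "homogeneous (\<mu> + (n - \<mu>)) (p i * q j)" using hp that by (intro hom_mult) auto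
      then show ?thesis using mu by simp
    qed
    have z: "p i * q j - p j * q i = 0" if "i \<in> {1..3}" "j \<in> {1..3}" for i j
    proof (rule hom_dehom_0)
      show "homogeneous n (p i * q j - p j * q i)" by (rule hom_diff[OF hpq[OF that] hpq[OF that(2,1)]])
      have "P i * Q j - P j * Q i = 0"
      proof -
        have "i = 1 \<or> i = 2 \<or> i = 3" "j = 1 \<or> j = 2 \<or> j = 3" using that by auto
        moreover have "P 2 * Q 3 = P 3 * Q 2" "P 3 * Q 1 = P 1 * Q 3" "P 1 * Q 2 = P 2 * Q 1"
          using C0[of 1] C0[of 2] C0[of 3] unfolding C_def by simp_all
        ultimately show ?thesis by auto
      qed
      then show "dehom (p i * q j - p j * q i) = 0" by (simp add: P_def Q_def)
    qed
    obtain l where l: "l \<in> {1..3}" "p l \<noteq> 0"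
    proof -
      have "\<not> (\<forall>i\<in>{1..3}. 1 * p i + 0 * q i = 0)"
      proof
        assume "\<forall>i\<in>{1..3}. 1 * p i + 0 * q i = 0"
        from mp[OF ind[THEN spec, THEN spec] this] show False by simp
      qed
      then obtain l where "l \<in> {1..3}" "p l \<noteq> 0" by auto
      then show ?thesis by (rule that)
    qed
    have "\<forall>i\<in>{1..3}. q l * p i + (- p l) * q i = 0"
    proof
      fix i :: nat assume i: "i \<in> {1..3}"
      have "q l * p i + (- p l) * q i = p i * q l - p l * q i" by (simp add: algebra_simps)
      then show "q l * p i + (- p l) * q i = 0" using z[OF i l(1)] by simp
    qed
    then have "- p l = 0" using mp[OF ind[THEN spec, THEN spec]] by blast
    then show False using l(2) by simp
  qed
  have dr: "degree r = 0"
  proof -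
    have "degree (r * A k) = degree r + n" using \<open>r \<noteq> 0\<close> Ak0 kn by (simp add: degree_mult_eq)
    moreover have "C k = r * A k" using r by (metis mult_1_right)
    ultimately show ?thesis using degC[of k] by simp
  qed
  define h0 where "h0 = coeff r 0"
  have rh: "r = [:h0:]" using degree_0_id[OF dr] unfolding h0_def by simp
  have h0: "h0 \<noteq> 0" using \<open>r \<noteq> 0\<close> rh by auto
  have Csm: "C l = Polynomial.smult h0 (A l)" for l using r[rule_format, of l] rh by simp
  have c1: "dehom (p 2) * dehom (q 3) - dehom (p 3) * dehom (q 2) = Polynomial.smult h0 (dehom a)"
    using Csm[of 1] by (simp add: C_def A_def P_def Q_def)
  have c2: "dehom (p 3) * dehom (q 1) - dehom (p 1) * dehom (q 3) = Polynomial.smult h0 (dehom b)"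
    using Csm[of 2] by (simp add: C_def A_def P_def Q_def)
  have c3: "dehom (p 1) * dehom (q 2) - dehom (p 2) * dehom (q 1) = Polynomial.smult h0 (dehom c)"
    using Csm[of 3] by (simp add: C_def A_def P_def Q_def)
  define GP where "GP = cs (dehom a) * dd (dehom (p 1)) + cs (dehom b) * dd (dehom (p 2)) + cs (dehom c) * dd (dehom (p 3))"
  define GQ where "GQ = cs (dehom a) * dd (dehom (q 1)) + cs (dehom b) * dd (dehom (q 2)) + cs (dehom c) * dd (dehom (q 3))"
  have dP': "dehom a * dehom (p 1) + dehom b * dehom (p 2) + dehom c * dehom (p 3) = 0"
    using dP by (simp add: A_def P_def)
  have dQ': "dehom a * dehom (q 1) + dehom b * dehom (q 2) + dehom c * dehom (q 3) = 0"
    using dQ by (simp add: A_def Q_def)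
  have ident: "bezout_mat n a b c x = x 3 \<cdot>\<^sub>m (Nmat n \<mu> h0 GP GQ * sylv_mat n \<mu> p q x)" for x
    unfolding GP_def GQ_def by (rule main_identity[OF hp mu n1 dP' dQ' c1 c2 c3 h0])
  have inv: "invertible_mat (Nmat n \<mu> h0 GP GQ)"
  proof -
    have "invertible_mat (Nmat n \<mu> h0 (cs (A 1) * dd (P 1) + cs (A 2) * dd (P 2) + cs (A 3) * dd (P 3))
                  (cs (A 1) * dd (Q 1) + cs (A 2) * dd (Q 2) + cs (A 3) * dd (Q 3)))"
      by (rule main_invertible[OF mu n1 dP dQ degA degPQ cop kn kz12 kz13 kz23 h0])
    then show ?thesis by (simp add: GP_def GQ_def A_def P_def Q_def)
  qed
  have "Nmat n \<mu> h0 GP GQ \<in> carrier_mat n n" by (simp add: Nmat_def)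
  then show ?thesis using inv ident by blast
qed


end
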